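(* Let $n$ be an integer with $2^{k_n-1}<n<2^{k_n}$, where $k_n=\lceil\log_2 n\rceil$, and let $T_n^{gfb}=(T_a,T_b)$ be the GFB tree on $n$ leaves, so that $(n_a,n_b)=(n-2^{k_n-2},2^{k_n-2})$ if $n\in(2^{k_n-1},3\cdot2^{k_n-2})$; $(n_a,n_b)=(2^{k_n-1},2^{k_n-2})$ if $n=3\cdot 2^{k_n-2}$; $(n_a,n_b)=(2^{k_n-1},n-2^{k_n-1})$ if $n\in(3\cdot2^{k_n-2},2^{k_n})$. Suppose $\widehat T=(\widehat T_a,\widehat T_b)$ is a rooted binary tree on $n$ leaves whose maximal pending subtrees have $\widehat n_a,\widehat n_b$ leaves with $(\widehat n_a,\widehat n_b)=(n-2^{k_n-2}+j,\,2^{k_n-2}-j)$ with $j\in\{1,\dots,2^{k_n-2}-1\}$ if $n\in(2^{k_n-1},3\cdot2^{k_n-2})$; $(\widehat n_a,\widehat n_b)=(2^{k_n-1}+j,\,2^{k_n-2}-j)$ with $j\in\{1,\dots,2^{k_n-2}-1\}$ if $n=3\cdot2^{k_n-2}$; $(\widehat n_a,\widehat n_b)=(2^{k_n-1}+j,\,n-2^{k_n-1}-j)$ with $j\in\{1,\dots,n-2^{k_n-1}-1\}$ if $n\in(3\cdot2^{k_n-2},2^{k_n})$. Then $c_n=\mathcal{C}(T_n^{gfb})<\mathcal{C}(\widehat T)$; in particular $\widehat T$ does not have minimal Colless index.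
   Context: A rooted binary tree with $n\geq 2$ leaves is a rooted tree whose root has degree 2 and all other internal nodes have degree 3; for $n=1$ it is a single node. Trees are considered up to isomorphism. Every rooted binary tree $T$ with $n\geq2$ leaves decomposes as $T=(T_a,T_b)$ where $T_a,T_b$ are the subtrees rooted at the two children of the root (maximal pending subtrees), with $n_a\geq n_b$ leaves respectively. For an internal node $v$ with children $v_1,v_2$, let $\kappa(v_i)$ be the number of leaves descending from $v_i$ ($1$ if a leaf). The Colless index is $\mathcal{C}(T)=\sum_v|\kappa(v_1)-\kappa(v_2)|$ over internal nodes $v$; $c_n$ is the minimum of $\mathcal{C}$ over rooted binary trees with $n$ leaves. The GFB tree $T_n^{gfb}$ is the output of: start with $n$ single-node trees; while more than one tree remains, remove a tree $u$ of minimal size (number of leaves), then remove a tree $v$ of minimal size among the remaining ones, and insert the tree with a new root whose children are the roots of $u$ and $v$; output the remaining tree. *)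

theory Defs
  imports Complex_Main
begin

text \<open>Rooted binary trees (up to isomorphism; the order of children is irrelevant
for every quantity used below, since all of them are symmetric in the two children).\<close>
datatype rbtree = Leaf | Node rbtree rbtree

fun leaves :: "rbtree \<Rightarrow> nat" where
  "leaves Leaf = 1"
| "leaves (Node l r) = leaves l + leaves r"

fun colless :: "rbtree \<Rightarrow> nat" where
  "colless Leaf = 0"
| "colless (Node l r) =
     (if leaves l \<ge> leaves r then leaves l - leaves r else leaves r - leaves l)
     + colless l + colless r"

definition min_colless :: "nat \<Rightarrow> nat" where
  "min_colless n = (LEAST c. \<exists>t. leaves t = n \<and> colless t = c)"

text \<open>The GFB algorithm, as a (possibly nondeterministic, because of ties) relation:
  gfb_out F t means that starting from the forest F the algorithm can output t.\<close>
inductive gfb_out :: "rbtree list \<Rightarrow> rbtree \<Rightarrow> bool" where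
  single: "gfb_out [t] t"
| step: "\<lbrakk> u \<in> set F; \<forall>w\<in>set F. leaves u \<le> leaves w;
           v \<in> set (remove1 u F); \<forall>w\<in>set (remove1 u F). leaves v \<le> leaves w;
           gfb_out (Node u v # remove1 v (remove1 u F)) t \<rbrakk> \<Longrightarrow> gfb_out F t"

definition is_gfb :: "nat \<Rightarrow> rbtree \<Rightarrow> bool" where
  "is_gfb n t \<longleftrightarrow> gfb_out (replicate n Leaf) t"

end

theory Submission
  imports Defs "HOL-Library.Multiset"
begin


function cf :: "nat \<Rightarrow> nat" where
  "cf n = (if n \<le> 1 then 0 else cf (n div 2) + cf ((n+1) div 2) + n mod 2)"
  by auto
termination by (relation "measure id") auto

declare cf.simps[simp del]

lemma cf_0[simp]: "cf 0 = 0" by (simp add: cf.simps)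
lemma cf_1[simp]: "cf 1 = 0" by (simp add: cf.simps)
lemma cf_Suc0[simp]: "cf (Suc 0) = 0" by (simp add: cf.simps)
lemma cf_even: "cf (2*m) = 2 * cf m"
proof (cases "m = 0")
  case False
  then show ?thesis by (subst cf.simps) simp
qed simp
lemma cf_odd: "1 \<le> m \<Longrightarrow> cf (2*m+1) = cf m + cf (m+1) + 1"
  by (subst cf.simps) simp
lemma cf_2[simp]: "cf 2 = 0" using cf_even[of 1] by simp
lemma cf_2'[simp]: "cf (Suc (Suc 0)) = 0" using cf_2 by (simp add: numeral_2_eq_2)
lemma cf_3[simp]: "cf 3 = 1" using cf_odd[of 1] by simp
lemma cf_pow[simp]: "cf (2^i) = 0"
  by (induction i) (simp_all add: cf_even)

definition Gc :: "nat \<Rightarrow> nat \<Rightarrow> int" where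
  "Gc x y = \<bar>int x - int y\<bar> + int (cf x) + int (cf y) - int (cf (x+y))"

lemma Gc_sym: "Gc x y = Gc y x"
  unfolding Gc_def by (simp add: add.commute abs_minus_commute)

lemma Gc_ee: "Gc (2*x) (2*y) = 2 * Gc x y"
proof -
  have e: "2*x+2*y = 2*(x+y)" by simp
  show ?thesis unfolding Gc_def e cf_even by (simp add: abs_if)
qed

lemma Gc_eo: "1 \<le> y \<Longrightarrow> Gc (2*x) (2*y+1) = Gc x y + Gc x (y+1)"
proof -
  assume y: "1 \<le> y"
  have e: "2*x+(2*y+1) = 2*(x+y)+1" "x+(y+1) = x+y+1" by simp_all
  have c1: "cf (2*(x+y)+1) = cf (x+y) + cf (x+y+1) + 1" using y by (intro cf_odd) simp
  have c2: "cf (2*y+1) = cf y + cf (y+1) + 1" using y by (rule cf_odd)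
  show ?thesis unfolding Gc_def e c1 c2 cf_even by (simp add: abs_if)
qed

lemma Gc_oe: "1 \<le> x \<Longrightarrow> Gc (2*x+1) (2*y) = Gc x y + Gc (x+1) y"
  using Gc_eo[of x y] Gc_sym by (metis)

lemma Gc_oo: "1 \<le> x \<Longrightarrow> 1 \<le> y \<Longrightarrow>
   Gc (2*x+1) (2*y+1) = Gc x (y+1) + Gc (x+1) y + (if x = y then 0 else 2)"
proof -
  assume x: "1 \<le> x" and y: "1 \<le> y"
  have e: "2*x+1+(2*y+1) = 2*(x+y+1)" "x + (y+1) = x+y+1" "x+1+y = x+y+1" by simp_all
  have c1: "cf (2*x+1) = cf x + cf (x+1) + 1" using x by (rule cf_odd)
  have c2: "cf (2*y+1) = cf y + cf (y+1) + 1" using y by (rule cf_odd)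
  show ?thesis unfolding Gc_def e c1 c2 cf_even by (simp add: abs_if)
qed

lemma Gc_x1_even: "1 \<le> m \<Longrightarrow> Gc (2*m) 1 = Gc m 1 + int m - 1"
proof -
  assume m: "1 \<le> m"
  have c1: "cf (2*m+1) = cf m + cf (m+1) + 1" using m by (rule cf_odd)
  show ?thesis unfolding Gc_def c1 cf_even cf_1 using m by (simp add: abs_if)
qed

lemma Gc_x1_odd: "1 \<le> m \<Longrightarrow> Gc (2*m+1) 1 = Gc m 1 + int m + 2"
proof -
  assume m: "1 \<le> m"
  have e: "2*m+1+1 = 2*(m+1)" by simp
  have c1: "cf (2*m+1) = cf m + cf (m+1) + 1" using m by (rule cf_odd)
  show ?thesis unfolding Gc_def e c1 cf_even cf_1 using m by (simp add: abs_if)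
qed

lemma Gc_1_1: "Gc 1 1 = 0" by (simp add: Gc_def)

lemma Gc_nonneg: "1 \<le> x \<Longrightarrow> 1 \<le> y \<Longrightarrow> 0 \<le> Gc x y"
proof (induction "x+y" arbitrary: x y rule: less_induct)
  case less
  have x1: "1 \<le> m \<Longrightarrow> 2*m+1 < x + y \<Longrightarrow> 0 \<le> Gc (2*m+1) 1" for m
    using less.hyps[of m 1] Gc_x1_odd[of m] by simp
  consider (ee) "even x" "even y" | (eo) "even x" "odd y" | (oe) "odd x" "even y" | (oo) "odd x" "odd y" by blast
  then show ?case
  proof cases
    case ee
    then obtain a b where ab: "x = 2*a" "y = 2*b" by (auto elim!: evenE)
    then show ?thesis using less.prems less.hyps[of a b] Gc_ee by simp
  next
    case eo
    then obtain a b where ab: "x = 2*a" "y = 2*b+1" by (auto elim!: evenE oddE)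
    show ?thesis
    proof (cases "b = 0")
      case True
      then show ?thesis using ab less.prems less.hyps[of a 1] Gc_x1_even[of a] by simp
    next
      case False
      then show ?thesis using ab less.prems less.hyps[of a b] less.hyps[of a "b+1"] Gc_eo[of b a] by simp
    qed
  next
    case oe
    then obtain a b where ab: "x = 2*a+1" "y = 2*b" by (auto elim!: evenE oddE)
    show ?thesis
    proof (cases "a = 0")
      case True
      then show ?thesis using ab less.prems less.hyps[of b 1] Gc_x1_even[of b] Gc_sym[of x y] by simp
    next
      case False
      then show ?thesis using ab less.prems less.hyps[of a b] less.hyps[of "a+1" b] Gc_oe[of a b] by simp
    qed
  next
    case oo
    then obtain a b where ab: "x = 2*a+1" "y = 2*b+1" by (auto elim!: oddE)
    show ?thesis
    proof (cases "a = 0 \<or> b = 0")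
      case True
      then show ?thesis
      proof
        assume a: "a = 0"
        show ?thesis
        proof (cases "b = 0")
          case True then show ?thesis using a ab Gc_1_1 by simp
        next
          case False then show ?thesis using a ab x1[of b] Gc_sym[of x y] by simp
        qed
      next
        assume b: "b = 0"
        show ?thesis
        proof (cases "a = 0")
          case True then show ?thesis using b ab Gc_1_1 by simp
        next
          case False then show ?thesis using b ab x1[of a] by simp
        qed
      qed
    next
      case False
      then show ?thesis using ab less.hyps[of a "b+1"] less.hyps[of "a+1" b] Gc_oo[of a b] by simp
    qed
  qed
qed

lemma Gc_x1_pos: "3 \<le> x \<Longrightarrow> 0 < Gc x 1"
proof -
  assume x: "3 \<le> x"
  consider (e) m where "x = 2*m" | (o) m where "x = 2*m+1" by (metis oddE evenE)
  then show ?thesis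
  proof cases
    case e then show ?thesis using x Gc_x1_even[of m] Gc_nonneg[of m 1] by simp
  next
    case o then show ?thesis using x Gc_x1_odd[of m] Gc_nonneg[of m 1] by simp
  qed
qed


lemma Gc_self: "Gc x x = 0"
  unfolding Gc_def using cf_even[of x] by (simp add: mult_2[symmetric])

lemma Gc_zero: "q = 2^i \<Longrightarrow> q \<le> 2*y \<Longrightarrow> y \<le> 2*q \<Longrightarrow> Gc q y = 0"
proof (induction i arbitrary: q y)
  case 0
  then have "y = 1 \<or> y = 2" by auto
  then show ?case using 0 by (auto simp: Gc_def)
next
  case (Suc i)
  define b where "b = (2::nat)^i"
  have q: "q = 2*b" using Suc.prems b_def by simp
  have b1: "1 \<le> b" unfolding b_def by simp
  have bb: "b = 1 \<or> even b" unfolding b_def by (cases i) auto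
  consider (e) t where "y = 2*t" | (o) t where "y = 2*t+1" by (metis oddE evenE)
  then show ?case
  proof cases
    case e
    then show ?thesis using Suc.IH[of b t] Suc.prems q b_def Gc_ee by simp
  next
    case o
    show ?thesis
    proof (cases "t = 0")
      case True
      then have "q = 2" "y = 1" using o q Suc.prems b1 by auto
      then show ?thesis by (simp add: Gc_def)
    next
      case False
      have "b \<le> 2*t" using bb o q Suc.prems False by auto
      then show ?thesis using Suc.IH[of b t] Suc.IH[of b "t+1"] Suc.prems q o b_def Gc_eo[of t b] False by simp
    qed
  qed
qed

lemma Gc_strict: "a = 2^i \<Longrightarrow> 2*a \<le> x+y \<Longrightarrow> x+y \<le> 4*a \<Longrightarrow> 1 \<le> y \<Longrightarrow>
   y < max a (x+y-2*a) \<Longrightarrow> 0 < Gc x y"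
proof (induction i arbitrary: a x y)
  case 0
  then have "y = 1" "x = 3" by auto
  then show ?case using Gc_x1_pos by simp
next
  case (Suc i)
  define b where "b = (2::nat)^i"
  have a: "a = 2*b" using Suc.prems b_def by simp
  have b1: "1 \<le> b" unfolding b_def by simp
  have yx: "y < x" using Suc.prems by auto
  show ?case
  proof (cases "y = 1")
    case True
    then have "3 \<le> x" using Suc.prems a b1 by auto
    then show ?thesis using True Gc_x1_pos by simp
  next
    case False
    then have y2: "2 \<le> y" using Suc.prems by simp
    consider (ee) "even x" "even y" | (eo) "even x" "odd y" | (oe) "odd x" "even y" | (oo) "odd x" "odd y" by blast
    then show ?thesis
    proof cases
      case ee
      then obtain x' y' where xy: "x = 2*x'" "y = 2*y'" by (auto elim!: evenE)
      have "0 < Gc x' y'" using Suc.IH[of b x' y'] Suc.prems a b_def xy y2 by auto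
      then show ?thesis using xy Gc_ee by simp
    next
      case eo
      then obtain x' y' where xy: "x = 2*x'" "y = 2*y'+1" by (auto elim!: evenE oddE)
      have "0 < Gc x' y'" using Suc.IH[of b x' y'] Suc.prems a b_def xy y2 by auto
      moreover have "0 \<le> Gc x' (y'+1)" using Gc_nonneg xy yx by simp
      ultimately show ?thesis using xy Gc_eo[of y' x'] y2 by simp
    next
      case oe
      then obtain x' y' where xy: "x = 2*x'+1" "y = 2*y'" by (auto elim!: evenE oddE)
      have "0 < Gc (x'+1) y'" using Suc.IH[of b "x'+1" y'] Suc.prems a b_def xy y2 by auto
      moreover have "0 \<le> Gc x' y'" using Gc_nonneg xy yx y2 by simp
      ultimately show ?thesis using xy Gc_oe[of x' y'] y2 yx by simp
    next
      case oo
      then obtain x' y' where xy: "x = 2*x'+1" "y = 2*y'+1" by (auto elim!: oddE)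
      have "0 \<le> Gc x' (y'+1)" "0 \<le> Gc (x'+1) y'" using Gc_nonneg xy yx y2 by simp_all
      then show ?thesis using xy Gc_oo[of x' y'] y2 yx by simp
    qed
  qed
qed



definition Rinv :: "nat multiset \<Rightarrow> bool" where
  "Rinv M \<longleftrightarrow> (\<exists>i p q E. M = replicate_mset p (2^i) + replicate_mset q (2*2^i) + E \<and>
      (E = {#} \<or> (\<exists>e. E = {#e#} \<and> 2^i < e \<and> e < 2*2^i)))"

lemma Rinv_intro: "M = replicate_mset p (2^i) + replicate_mset q (2*2^i) + E \<Longrightarrow>
      (E = {#} \<or> (\<exists>e. E = {#e#} \<and> 2^i < e \<and> e < 2*2^i)) \<Longrightarrow> Rinv M"
  unfolding Rinv_def by blast

lemma step_R:
  assumes R: "Rinv M" and x: "x \<in># M" and xm: "\<forall>z\<in>#M. x \<le> z"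
    and y: "y \<in># M - {#x#}" and ym: "\<forall>z\<in>#M - {#x#}. y \<le> z"
  shows "x \<le> y \<and> Gc y x = 0 \<and> Rinv (add_mset (x+y) (M - {#x#} - {#y#}))"
proof -
  obtain i p q E where M: "M = replicate_mset p (2^i) + replicate_mset q (2*2^i) + E"
    and E: "E = {#} \<or> (\<exists>e. E = {#e#} \<and> 2^i < e \<and> e < 2*2^i)"
    using R unfolding Rinv_def by blast
  define a where "a = (2::nat)^i"
  have a1: "1 \<le> a" unfolding a_def by simp
  have xy: "x \<le> y" using y xm by (meson in_diffD)
  have ge: "a \<le> z" if "z \<in># M" for z using that E unfolding M a_def by (auto split: if_splits)
  consider (p2) p' where "p = Suc (Suc p')" | (p1) "p = 1" | (p0) "p = 0"
    by (metis One_nat_def not0_implies_Suc)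
  then show ?thesis
  proof cases
    case p2
    have "a \<in># M" unfolding M p2 a_def by simp
    then have xa: "x = a" using x xm ge by (meson le_antisym)
    have M1: "M - {#x#} = replicate_mset (Suc p') a + replicate_mset q (2*a) + E"
      unfolding M p2 xa a_def by simp
    have "a \<in># M - {#x#}" unfolding M1 by simp
    then have ya: "y = a" using y ym ge by (meson le_antisym in_diffD)
    have eq: "add_mset (x+y) (M - {#x#} - {#y#}) = replicate_mset p' (2^i) + replicate_mset (Suc q) (2*2^i) + E"
      unfolding M1 by (simp add: xa ya a_def mult_2)
    have "Rinv (add_mset (x+y) (M - {#x#} - {#y#}))" unfolding eq by (rule Rinv_intro[OF refl E])
    then show ?thesis using xa ya Gc_self by simp
  next
    case p1
    have "a \<in># M" unfolding M p1 a_def by simp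
    then have xa: "x = a" using x xm ge by (meson le_antisym)
    have M1: "M - {#x#} = replicate_mset q (2*a) + E"
      unfolding M p1 xa a_def by simp
    show ?thesis
    proof (cases "E = {#}")
      case True
      then obtain q' where q: "q = Suc q'" using y M1 by (cases q) auto
      have ya: "y = 2*a" using y True unfolding M1 by (simp add: q split: if_splits)
      have eq: "add_mset (x+y) (M - {#x#} - {#y#}) = replicate_mset q' (2^Suc i) + replicate_mset 0 (2*2^Suc i) + {#3 * 2^i#}"
        unfolding M1 by (simp add: xa ya a_def True q)
      have "Rinv (add_mset (x+y) (M - {#x#} - {#y#}))" unfolding eq by (rule Rinv_intro[OF refl]) simp
      moreover have "Gc y x = 0" using Gc_zero[of "2*a" "Suc i" a] ya xa a_def by simp
      ultimately show ?thesis using xy by simp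
    next
      case False
      then obtain e where e: "E = {#e#}" "a < e" "e < 2*a" using E a_def by auto
      have ye: "y = e" using y ym e unfolding M1 by (cases q) (auto split: if_splits)
      have eq: "add_mset (x+y) (M - {#x#} - {#y#}) = replicate_mset q (2^Suc i) + replicate_mset 0 (2*2^Suc i) + {#a+e#}"
        unfolding M1 by (simp add: xa ye a_def e)
      have "Rinv (add_mset (x+y) (M - {#x#} - {#y#}))" unfolding eq by (rule Rinv_intro[OF refl]) (use e a_def in simp)
      moreover have "Gc y x = 0" using Gc_zero[of a i e] ye xa a_def e Gc_sym by simp
      ultimately show ?thesis using xy by simp
    qed
  next
    case p0
    show ?thesis
    proof (cases "E = {#}")
      case True
      then obtain q' where q: "q = Suc q'" using x M p0 by (cases q) auto
      have xa: "x = 2*a" using x True unfolding M p0 q a_def by (simp split: if_splits)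
      have M1: "M - {#x#} = replicate_mset q' (2*a)"
        unfolding M p0 xa a_def q True by simp
      then obtain q'' where q': "q' = Suc q''" using y by (cases q') auto
      have ya: "y = 2*a" using y unfolding M1 q' by (simp split: if_splits)
      have eq: "add_mset (x+y) (M - {#x#} - {#y#}) = replicate_mset q'' (2^Suc i) + replicate_mset 1 (2*2^Suc i) + {#}"
        unfolding M1 by (simp add: xa ya a_def q')
      have "Rinv (add_mset (x+y) (M - {#x#} - {#y#}))" unfolding eq by (rule Rinv_intro[OF refl]) simp
      then show ?thesis using xa ya Gc_self by simp
    next
      case False
      then obtain e where e: "E = {#e#}" "a < e" "e < 2*a" using E a_def by auto
      have xe: "x = e" using x xm e unfolding M p0 a_def by (cases q) (auto split: if_splits)
      have M1: "M - {#x#} = replicate_mset q (2*a)"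
        unfolding M p0 xe a_def e by simp
      then obtain q' where q: "q = Suc q'" using y by (cases q) auto
      have ya: "y = 2*a" using y unfolding M1 by (simp add: q split: if_splits)
      have eq: "add_mset (x+y) (M - {#x#} - {#y#}) = replicate_mset q' (2^Suc i) + replicate_mset 0 (2*2^Suc i) + {#e+2*a#}"
        unfolding M1 by (simp add: xe ya a_def q)
      have "Rinv (add_mset (x+y) (M - {#x#} - {#y#}))" unfolding eq by (rule Rinv_intro[OF refl]) (use e a_def in simp)
      moreover have "Gc y x = 0" using Gc_zero[of "2*a" "Suc i" e] ya xe a_def e by simp
      ultimately show ?thesis using xy by simp
    qed
  qed
qed



lemma leaves_pos: "1 \<le> leaves t" by (induction t) auto

lemma mset_map_remove1: "u \<in> set F \<Longrightarrow> mset (map g (remove1 u F)) = mset (map g F) - {#g u#}"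
  by (induction F) auto

lemma gfb_leaves: "gfb_out F t \<Longrightarrow> leaves t = sum_list (map leaves F)"
proof (induction rule: gfb_out.induct)
  case (single t) then show ?case by simp
next
  case (step u F v t)
  have "v \<in> set (remove1 u F)" using step by simp
  then have "sum_list (map leaves (remove1 u F)) = leaves v + sum_list (map leaves (remove1 v (remove1 u F)))"
    by (rule sum_list_map_remove1)
  moreover have "sum_list (map leaves F) = leaves u + sum_list (map leaves (remove1 u F))"
    using step(1) by (rule sum_list_map_remove1)
  ultimately show ?case using step by simp
qed

lemma gfb_inv: "gfb_out F t \<Longrightarrow> Rinv (mset (map leaves F)) \<Longrightarrow>
   (\<forall>s\<in>set F. colless s = cf (leaves s)) \<Longrightarrow> colless t = cf (leaves t)"
proof (induction rule: gfb_out.induct)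
  case (single t) then show ?case by simp
next
  case (step u F v t)
  define M where "M = mset (map leaves F)"
  have x: "leaves u \<in># M" using step(1) unfolding M_def by simp
  have xm: "\<forall>z\<in>#M. leaves u \<le> z" using step(2) unfolding M_def by auto
  have M1: "mset (map leaves (remove1 u F)) = M - {#leaves u#}"
    unfolding M_def using step(1) by (rule mset_map_remove1)
  have y: "leaves v \<in># M - {#leaves u#}" using step(3) unfolding M1[symmetric]
    by (metis image_eqI in_multiset_in_set list.set_map)
  have ym: "\<forall>z\<in>#M - {#leaves u#}. leaves v \<le> z" using step(4) unfolding M1[symmetric] set_mset_mset set_map by blast
  from step_R[OF step.prems(1)[folded M_def] x xm y ym]
  have xy: "leaves u \<le> leaves v" and G0: "Gc (leaves v) (leaves u) = 0"
    and R: "Rinv (add_mset (leaves u + leaves v) (M - {#leaves u#} - {#leaves v#}))" by auto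
  have "mset (map leaves (Node u v # remove1 v (remove1 u F))) =
        add_mset (leaves u + leaves v) (M - {#leaves u#} - {#leaves v#})"
    using mset_map_remove1[OF step(3), of leaves] M1 by simp
  with R have R': "Rinv (mset (map leaves (Node u v # remove1 v (remove1 u F))))" by simp
  have cu: "colless u = cf (leaves u)" using step.prems(2) step(1) by simp
  have cv: "colless v = cf (leaves v)" using step.prems(2) step(3) by (meson notin_set_remove1)
  have e: "int (cf (leaves v + leaves u)) = int (leaves v) - int (leaves u) + int (cf (leaves u)) + int (cf (leaves v))"
    using G0 xy unfolding Gc_def by (simp only: abs_of_nonneg)
  have "colless (Node u v) = leaves v - leaves u + cf (leaves u) + cf (leaves v)"
    using xy cu cv by simp
  also have "\<dots> = cf (leaves v + leaves u)" using e xy by linarith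
  finally have "colless (Node u v) = cf (leaves (Node u v))" by (simp add: add.commute)
  moreover have "\<forall>s\<in>set (remove1 v (remove1 u F)). colless s = cf (leaves s)"
    using step.prems(2) by (meson notin_set_remove1)
  ultimately show ?case using step.IH R' by simp
qed

lemma gfb_ex: "F \<noteq> [] \<Longrightarrow> \<exists>t. gfb_out F t"
proof (induction "length F" arbitrary: F rule: less_induct)
  case less
  show ?case
  proof (cases "length F = 1")
    case True
    then obtain s where "F = [s]" by (metis One_nat_def length_0_conv length_Suc_conv)
    then show ?thesis using gfb_out.single by blast
  next
    case False
    obtain u0 where "u0 \<in> set F" using less.prems by (cases F) auto
    then obtain u where u: "u \<in> set F" "\<forall>w. w \<in> set F \<longrightarrow> leaves u \<le> leaves w"
      using ex_has_least_nat[of "\<lambda>w. w \<in> set F" u0 leaves] by blast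
    have "length F \<noteq> 0" using less.prems by simp
    then have L2: "length F \<ge> 2" using False by linarith
    then have l: "length (remove1 u F) \<ge> 1" using u(1) by (simp add: length_remove1)
    then obtain v0 where "v0 \<in> set (remove1 u F)" by (cases "remove1 u F") auto
    then obtain v where v: "v \<in> set (remove1 u F)" "\<forall>w. w \<in> set (remove1 u F) \<longrightarrow> leaves v \<le> leaves w"
      using ex_has_least_nat[of "\<lambda>w. w \<in> set (remove1 u F)" v0 leaves] by blast
    have "length (remove1 v (remove1 u F)) = length (remove1 u F) - 1" using v(1) by (simp add: length_remove1)
    moreover have "length (remove1 u F) = length F - 1" using u(1) by (simp add: length_remove1)
    ultimately have "length (Node u v # remove1 v (remove1 u F)) < length F" using L2 by simp
    then obtain t where "gfb_out (Node u v # remove1 v (remove1 u F)) t" using less.hyps by blast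
    then have "gfb_out F t" using u v by (intro gfb_out.step[of u F v]) auto
    then show ?thesis by blast
  qed
qed

lemma colless_lb: "cf (leaves t) \<le> colless t"
proof (induction t)
  case Leaf then show ?case by simp
next
  case (Node l r)
  have "0 \<le> Gc (leaves l) (leaves r)" using leaves_pos by (intro Gc_nonneg)
  then show ?case using Node unfolding Gc_def by (auto split: if_splits)
qed

lemma gfb_colless: "is_gfb n t \<Longrightarrow> colless t = cf n \<and> leaves t = n"
proof -
  assume "is_gfb n t"
  then have g: "gfb_out (replicate n Leaf) t" unfolding is_gfb_def .
  have R: "Rinv (mset (map leaves (replicate n Leaf)))"
    by (rule Rinv_intro[of _ n 0 0 "{#}"]) simp_all
  have lt: "leaves t = n" using gfb_leaves[OF g] by (simp add: sum_list_replicate)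
  then show ?thesis using gfb_inv[OF g R] by simp
qed

lemma min_colless_eq: "is_gfb n t \<Longrightarrow> min_colless n = cf n"
proof -
  assume g: "is_gfb n t"
  show ?thesis unfolding min_colless_def
  proof (rule Least_equality)
    show "\<exists>t. leaves t = n \<and> colless t = cf n" using gfb_colless[OF g] by blast
  next
    fix c assume "\<exists>t. leaves t = n \<and> colless t = c"
    then show "cf n \<le> c" using colless_lb by blast
  qed
qed

theorem theorem6:
  fixes n k :: nat and ta tb :: rbtree
  assumes hk: "k = nat \<lceil>log 2 (real n)\<rceil>"
    and hlow: "2 ^ (k - 1) < n" and hupp: "n < 2 ^ k"
    and hsplit:
      "(2 ^ (k - 1) < n \<and> n < 3 * 2 ^ (k - 2) \<and>
          (\<exists>j. 1 \<le> j \<and> j \<le> 2 ^ (k - 2) - 1 \<and>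
               leaves ta = n - 2 ^ (k - 2) + j \<and> leaves tb = 2 ^ (k - 2) - j))
     \<or> (n = 3 * 2 ^ (k - 2) \<and>
          (\<exists>j. 1 \<le> j \<and> j \<le> 2 ^ (k - 2) - 1 \<and>
               leaves ta = 2 ^ (k - 1) + j \<and> leaves tb = 2 ^ (k - 2) - j))
     \<or> (3 * 2 ^ (k - 2) < n \<and> n < 2 ^ k \<and>
          (\<exists>j. 1 \<le> j \<and> j \<le> n - 2 ^ (k - 1) - 1 \<and>
               leaves ta = 2 ^ (k - 1) + j \<and> leaves tb = n - 2 ^ (k - 1) - j))"
  shows "(\<exists>t. is_gfb n t) \<and>
         (\<forall>t. is_gfb n t \<longrightarrow>
              min_colless n = colless t \<and> colless t < colless (Node ta tb))"
  proof -
  have n1: "1 \<le> n" using hlow by (metis le_less_trans less_imp_le_nat one_le_numeral one_le_power Suc_le_eq)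
  have k2: "2 \<le> k"
  proof (rule ccontr)
    assume "\<not> 2 \<le> k"
    then have "k - 2 = 0" "2 ^ k \<le> (2::nat)" by (auto simp: not_le less_2_cases_iff power_increasing)
    then show False using hsplit by auto
  qed
  define a where "a = (2::nat) ^ (k-2)"
  have kk: "k = (k-2) + 2" using k2 by simp
  have p1: "(2::nat) ^ (k-1) = 2*a" unfolding a_def using k2
    by (metis Suc_diff_Suc Suc_1 diff_Suc_1 kk le_add2 power_Suc add_diff_cancel_right' less_eq_Suc_le one_add_one)
  have p2: "(2::nat) ^ k = 4*a" unfolding a_def by (subst kk) (simp add: power_add)
  define x where "x = leaves ta"
  define y where "y = leaves tb"
  have cond: "x + y = n \<and> 1 \<le> y \<and> y < max a (x+y-2*a) \<and> 2*a \<le> x+y \<and> x+y \<le> 4*a"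
    using hsplit hlow hupp unfolding p1 p2 a_def[symmetric] x_def[symmetric] y_def[symmetric]
    by auto
  have pos: "0 < Gc x y" using Gc_strict[OF a_def] cond by blast
  have lb: "int (cf n) < int (colless (Node ta tb))"
  proof -
    have "cf x \<le> colless ta" "cf y \<le> colless tb" using colless_lb x_def y_def by auto
    moreover have "int (colless (Node ta tb)) = \<bar>int x - int y\<bar> + int (colless ta) + int (colless tb)"
      unfolding x_def y_def by auto
    ultimately show ?thesis using pos cond unfolding Gc_def by auto
  qed
  show ?thesis
  proof
    show "\<exists>t. is_gfb n t" unfolding is_gfb_def using gfb_ex[of "replicate n Leaf"] n1 by simp
  next
    show "\<forall>t. is_gfb n t \<longrightarrow> min_colless n = colless t \<and> colless t < colless (Node ta tb)"
    proof (intro allI impI)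
      fix t assume g: "is_gfb n t"
      show "min_colless n = colless t \<and> colless t < colless (Node ta tb)"
        using min_colless_eq[OF g] gfb_colless[OF g] lb by simp
    qed
  qed
qed

end
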